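(* Identify $S^1$ with $[0,1]/(0\sim1)$. Let $f:S^1\multimap S^1$ be given by $f(x)=\{0,\tfrac12\}$ for $x\notin[\tfrac13,\tfrac23]$ and $f(x)=\{0,\tfrac12,\tfrac{3x-1}{2}\}$ for $x\in[\tfrac13,\tfrac23]$. Then $f$ is a (lower and upper semicontinuous) at-most-3-valued map, but there is no function $w:S^1\times S^1\to\mathbb{N}$ such that $(f,w)$ is an $\mathbb{N}$-weighted map.
   Context: A weighted map from $X$ to $Y$ is a pair $\psi=(n_\psi,w_\psi)$ where (1) $n_\psi:X\multimap Y$ is an upper semicontinuous multivalued map with $n_\psi(x)$ a finite subset of $Y$ for all $x$; (2) $w_\psi:X\times Y\to\mathbb{N}$ is a function such that (i) $w_\psi(x,y)=0$ whenever $y\notin n_\psi(x)$, and (ii) for every open $U\subseteq Y$ and $x\in X$ with $n_\psi(x)\cap\partial U=\emptyset$ there is an open neighborhood $V$ of $x$ with $\sum_{y\in U}w_\psi(x,y)=\sum_{y\in U}w_\psi(z,y)$ for all $z\in V$. It is an $\mathbb{N}$-weighted map if moreover $w_\psi(x,y)>0$ for all $x\in X$ and $y\in n_\psi(x)$. An at-most-$n$-valued map is a lower and upper semicontinuous multivalued map whose values are nonempty sets of cardinality at most $n$. *)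

theory Defs
  imports "HOL-Analysis.Analysis"
begin

definition usc_map :: "'a topology \<Rightarrow> 'b topology \<Rightarrow> ('a \<Rightarrow> 'b set) \<Rightarrow> bool" where
  "usc_map X Y F \<longleftrightarrow> (\<forall>x\<in>topspace X. F x \<subseteq> topspace Y) \<and>
     (\<forall>U. openin Y U \<longrightarrow> openin X {x \<in> topspace X. F x \<subseteq> U})"

definition lsc_map :: "'a topology \<Rightarrow> 'b topology \<Rightarrow> ('a \<Rightarrow> 'b set) \<Rightarrow> bool" where
  "lsc_map X Y F \<longleftrightarrow> (\<forall>x\<in>topspace X. F x \<subseteq> topspace Y) \<and>
     (\<forall>U. openin Y U \<longrightarrow> openin X {x \<in> topspace X. F x \<inter> U \<noteq> {}})"

text \<open>Weighted map (n, w). Since w x vanishes outside the finite set n x, the sum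
  over y in U of w x y is the finite sum over U \<inter> n x.\<close>
definition weighted_map ::
  "'a topology \<Rightarrow> 'b topology \<Rightarrow> ('a \<Rightarrow> 'b set) \<Rightarrow> ('a \<Rightarrow> 'b \<Rightarrow> nat) \<Rightarrow> bool" where
  "weighted_map X Y n w \<longleftrightarrow>
     usc_map X Y n \<and>
     (\<forall>x\<in>topspace X. finite (n x)) \<and>
     (\<forall>x\<in>topspace X. \<forall>y\<in>topspace Y. y \<notin> n x \<longrightarrow> w x y = 0) \<and>
     (\<forall>U x. openin Y U \<and> x \<in> topspace X \<and> n x \<inter> (Y frontier_of U) = {} \<longrightarrow>
        (\<exists>V. openin X V \<and> x \<in> V \<and>
             (\<forall>z\<in>V. (\<Sum>y\<in>U \<inter> n x. w x y) = (\<Sum>y\<in>U \<inter> n z. w z y))))"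

definition N_weighted_map ::
  "'a topology \<Rightarrow> 'b topology \<Rightarrow> ('a \<Rightarrow> 'b set) \<Rightarrow> ('a \<Rightarrow> 'b \<Rightarrow> nat) \<Rightarrow> bool" where
  "N_weighted_map X Y n w \<longleftrightarrow> weighted_map X Y n w \<and>
     (\<forall>x\<in>topspace X. \<forall>y\<in>n x. w x y > 0)"

definition at_most_n_valued :: "'a topology \<Rightarrow> 'b topology \<Rightarrow> nat \<Rightarrow> ('a \<Rightarrow> 'b set) \<Rightarrow> bool" where
  "at_most_n_valued X Y k F \<longleftrightarrow> lsc_map X Y F \<and> usc_map X Y F \<and>
     (\<forall>x\<in>topspace X. F x \<noteq> {} \<and> finite (F x) \<and> card (F x) \<le> k)"

text \<open>The circle S^1 = [0,1]/(0~1), realised as the unit circle in the complex plane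
  via the standard homeomorphism t \<mapsto> exp(2 pi i t).\<close>
definition S1 :: "complex topology" where
  "S1 = top_of_set (sphere 0 1)"

definition circ :: "real \<Rightarrow> complex" where
  "circ t = cis (2 * pi * t)"

definition example_f :: "complex \<Rightarrow> complex set" where
  "example_f z = {circ 0, circ (1/2)} \<union>
     {circ ((3 * t - 1) / 2) | t. t \<in> {1/3..2/3} \<and> z = circ t}"

end

theory Submission
  imports Defs
begin

definition G :: "complex \<Rightarrow> complex" where
  "G z = circ (1/4 + 3 * Arg (-z) / (4*pi))"

lemma norm_circ[simp]: "norm (circ t) = 1"
  by (simp add: circ_def)

lemma circ_sphere[simp]: "circ t \<in> sphere 0 1"
  by simp

lemma circ0[simp]: "circ 0 = 1" and circ_half[simp]: "circ (1/2) = -1"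
  by (simp_all add: circ_def)

lemma Re_circ: "Re (circ t) = cos (2*pi*t)" and Im_circ: "Im (circ t) = sin (2*pi*t)"
  by (simp_all add: circ_def)

lemma circ_eq: assumes "circ a = circ b" shows "\<exists>n::int. a - b = n"
proof -
  have c1: "cis (2*pi*(a-b)) = 1"
    using assms by (simp add: circ_def right_diff_distrib flip: cis_divide)
  have "cos (2*pi*(a-b)) = 1"
    using arg_cong[OF c1, of Re] by simp
  then obtain n::int where "2*pi*(a-b) = real_of_int n*2*pi" using cos_one_2pi_int by metis
  then show ?thesis by (intro exI[of _ n]) auto
qed

lemma G_sphere[simp]: "G z \<in> sphere 0 1" by (simp add: G_def)
lemma norm_G: "norm (G z) = 1" by (simp add: G_def)

lemma cos_le_A: assumes "t \<in> {1/3..2/3}" shows "cos (2*pi*t) \<le> -1/2"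
proof (cases "t \<le> 1/2")
  case True
  have "cos (2*pi*t) \<le> cos (2*pi/3)"
    by (rule cos_monotone_0_pi_le) (use assms True in auto)
  then show ?thesis by (simp add: cos_120)
next
  case False
  have "cos (2*pi*t) = cos (2*pi*(1-t))"
    by (metis cos_2pi_minus right_diff_distrib' mult.right_neutral)
  also have "\<dots> \<le> cos (2*pi/3)"
    by (rule cos_monotone_0_pi_le) (use assms False in auto)
  finally show ?thesis by (simp add: cos_120)
qed

lemma cos_lt_A: assumes "t \<in> {1/3<..<2/3}" shows "cos (2*pi*t) < -1/2"
proof (cases "t \<le> 1/2")
  case True
  have "cos (2*pi*t) < cos (2*pi/3)"
    by (rule cos_monotone_0_pi) (use assms True in auto)
  then show ?thesis by (simp add: cos_120)
next
  case False
  have "cos (2*pi*t) = cos (2*pi*(1-t))"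
    by (metis cos_2pi_minus right_diff_distrib' mult.right_neutral)
  also have "\<dots> < cos (2*pi/3)"
    by (rule cos_monotone_0_pi) (use assms False in auto)
  finally show ?thesis by (simp add: cos_120)
qed

lemma Par: assumes "z \<in> sphere 0 1" "Re z \<le> -1/2" shows "\<exists>t\<in>{1/3..2/3}. z = circ t"
proof -
  define \<phi> where "\<phi> = Arg (-z)"
  have nz: "-z \<noteq> 0" using assms by auto
  have c: "cis \<phi> = -z" using cis_Arg[OF nz] assms by (simp add: \<phi>_def sgn_eq)
  have cph: "cos \<phi> \<ge> 1/2" using arg_cong[OF c, of Re] assms by simp
  have b: "- pi < \<phi>" "\<phi> \<le> pi" using Arg_bounded \<phi>_def by auto
  have "\<phi> \<le> pi/3"
  proof (rule ccontr)
    assume "\<not> ?thesis"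
    then have "cos \<phi> < cos (pi/3)" by (intro cos_monotone_0_pi) (use b in auto)
    then show False using cph by (simp add: cos_60)
  qed
  moreover have "-\<phi> \<le> pi/3"
  proof (rule ccontr)
    assume "\<not> ?thesis"
    then have "cos (-\<phi>) < cos (pi/3)" by (intro cos_monotone_0_pi) (use b in auto)
    then show False using cph by (simp add: cos_60)
  qed
  ultimately have t: "1/2 + \<phi>/(2*pi) \<in> {1/3..2/3}"
    by (auto simp: field_simps)
  have "circ (1/2 + \<phi>/(2*pi)) = cis (pi + \<phi>)"
    by (simp add: circ_def distrib_left)
  also have "\<dots> = - cis \<phi>" by (simp flip: cis_mult)
  also have "\<dots> = z" using c by simp
  finally show ?thesis using t by metis
qed

lemma G_circ: assumes "t \<in> {1/3..2/3}" shows "G (circ t) = circ ((3*t-1)/2)"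
proof -
  have "- circ t = cis (2*pi*t - pi)"
    by (simp add: circ_def flip: cis_divide)
  moreover have "2*pi*t - pi \<in> {-pi<..pi}" using assms by (auto simp: field_simps)
  ultimately have e1: "Arg (- circ t) = 2*pi*t - pi" by (simp add: Arg_cis)
  have e2: "1/4 + 3 * (2*pi*t - pi) / (4*pi) = (3*t-1)/2"
    by (simp add: field_simps)
  show ?thesis unfolding G_def by (simp only: e1 e2)
qed

lemma G_one: assumes "z \<in> sphere 0 1" "Re z \<le> -1/2" "G z = 1" shows "z = circ (1/3)"
proof -
  obtain t where t: "t \<in> {1/3..2/3}" "z = circ t" using Par assms by blast
  then have "circ ((3*t-1)/2) = circ 0" using G_circ assms by simp
  then obtain n::int where n: "(3*t-1)/2 - 0 = n" using circ_eq by blast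
  have "0 \<le> real_of_int n" "real_of_int n < 1" using t n by auto
  then have "n = 0" by linarith
  then have "t = 1/3" using n by simp
  then show ?thesis by (metis t(2))
qed

lemma G_bd: assumes "z \<in> sphere 0 1" "Re z = -1/2" shows "G z = 1 \<or> G z = -1"
proof -
  obtain t where t: "t \<in> {1/3..2/3}" "z = circ t" using Par assms by force
  have "\<not> t \<in> {1/3<..<2/3}" using cos_lt_A[of t] t assms by (auto simp: Re_circ)
  then have "t = 1/3 \<or> t = 2/3" using t by auto
  then show ?thesis
  proof
    assume "t = 1/3" then have "(3*t-1)/2 = 0" by simp
    then have "G z = circ 0" using G_circ t by metis
    then show ?thesis by simp
  next
    assume "t = 2/3" then have "(3*t-1)/2 = 1/2" by simp
    then have "G z = circ (1/2)" using G_circ t by metis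
    then show ?thesis by simp
  qed
qed

lemma f_char: assumes "z \<in> sphere 0 1"
  shows "example_f z = {1,-1} \<union> (if Re z \<le> -1/2 then {G z} else {})"
proof -
  have "{circ ((3 * t - 1) / 2) | t. t \<in> {1/3..2/3} \<and> z = circ t} =
        (if Re z \<le> -1/2 then {G z} else {})"
  proof (cases "Re z \<le> -1/2")
    case True
    then obtain t0 where t0: "t0 \<in> {1/3..2/3}" "z = circ t0" using Par assms by blast
    have "{circ ((3 * t - 1) / 2) | t. t \<in> {1/3..2/3} \<and> z = circ t} = {G z}"
    proof (intro equalityI subsetI)
      fix y assume "y \<in> {circ ((3 * t - 1) / 2) | t. t \<in> {1/3..2/3} \<and> z = circ t}"
      then obtain t where "t \<in> {1/3..2/3}" "z = circ t" "y = circ ((3 * t - 1) / 2)" by blast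
      then show "y \<in> {G z}" using G_circ by simp
    next
      fix y assume "y \<in> {G z}"
      then show "y \<in> {circ ((3 * t - 1) / 2) | t. t \<in> {1/3..2/3} \<and> z = circ t}"
        using t0 G_circ by auto
    qed
    then show ?thesis using True by simp
  next
    case False
    then show ?thesis using cos_le_A by (auto simp: Re_circ)
  qed
  then show ?thesis unfolding example_f_def by simp
qed

lemma G_cont: assumes "Re z < 0" shows "continuous (at z) G"
proof -
  have "-z \<notin> \<real>\<^sub>\<le>\<^sub>0" using assms by (auto simp: complex_nonpos_Reals_iff)
  then have "continuous (at z) (\<lambda>z. Arg (-z))"
    by (intro continuous_at_compose[of z uminus Arg, unfolded o_def]) (auto intro: continuous_at_Arg)
  moreover have "\<And>r. isCont circ r"
    unfolding circ_def cis_conv_exp by (intro continuous_intros)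
  ultimately show ?thesis unfolding G_def
    by (intro continuous_at_compose[of z "\<lambda>z. 1/4 + 3 * Arg (-z) / (4*pi)" circ, unfolded o_def])
       (auto intro!: continuous_intros)
qed

lemma G_cont_on: "continuous_on {z. Re z < c} G" if "c \<le> 0"
  using G_cont that by (intro continuous_at_imp_continuous_on) auto

lemma open_G: "c \<le> 0 \<Longrightarrow> open T \<Longrightarrow> open (G -` T \<inter> {z. Re z < c})"
  using G_cont_on continuous_on_open_vimage[of "{z. Re z < c}" G] open_halfspace_Re_lt by blast

lemma part1: "at_most_n_valued S1 S1 3 example_f"
proof -
  let ?S = "sphere (0::complex) 1"
  have sub: "\<forall>x\<in>?S. example_f x \<subseteq> ?S" using f_char norm_G by auto
  have usc: "openin (top_of_set ?S) {x \<in> ?S. example_f x \<subseteq> U}" if UU: "openin (top_of_set ?S) U" for U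
  proof -
    obtain T where T: "open T" "U = ?S \<inter> T" using openin_open[THEN iffD1, OF UU] by blast
    show ?thesis
    proof (cases "1 \<in> T \<and> -1 \<in> T")
      case True
      have eq: "{x \<in> ?S. example_f x \<subseteq> U} = ?S \<inter> ({z. Re z > -1/2} \<union> (G -` T \<inter> {z. Re z < 0}))"
        using True T norm_G by (auto simp: f_char split: if_splits)
      have op: "open ({z. Re z > -1/2} \<union> (G -` T \<inter> {z. Re z < 0}))"
        by (rule open_Un[OF open_halfspace_Re_gt open_G[OF _ T(1)]]) simp
      show ?thesis unfolding eq by (rule openin_open_Int[OF op])
    next
      case False
      then have "{x \<in> ?S. example_f x \<subseteq> U} = {}"
        using T by (auto simp: f_char)
      then show ?thesis by (simp only: openin_empty)
    qed
  qed
  have lsc: "openin (top_of_set ?S) {x \<in> ?S. example_f x \<inter> U \<noteq> {}}" if UU: "openin (top_of_set ?S) U" for U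
  proof -
    obtain T where T: "open T" "U = ?S \<inter> T" using openin_open[THEN iffD1, OF UU] by blast
    show ?thesis
    proof (cases "1 \<in> T \<or> -1 \<in> T")
      case True
      then have "{x \<in> ?S. example_f x \<inter> U \<noteq> {}} = ?S"
        using T by (auto simp: f_char)
      then show ?thesis using openin_topspace[of "top_of_set ?S"] by simp
    next
      case False
      have eq: "{x \<in> ?S. example_f x \<inter> U \<noteq> {}} = ?S \<inter> (G -` T \<inter> {z. Re z < -1/2})"
      proof (intro equalityI subsetI)
        fix x assume x: "x \<in> {x \<in> ?S. example_f x \<inter> U \<noteq> {}}"
        then have xS: "x \<in> ?S" and "Re x \<le> -1/2" "G x \<in> T"
          using T False by (auto simp: f_char split: if_splits)
        moreover have "Re x \<noteq> -1/2" using G_bd[OF xS] False \<open>G x \<in> T\<close> by auto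
        ultimately show "x \<in> ?S \<inter> (G -` T \<inter> {z. Re z < -1/2})" by auto
      next
        fix x assume "x \<in> ?S \<inter> (G -` T \<inter> {z. Re z < -1/2})"
        then show "x \<in> {x \<in> ?S. example_f x \<inter> U \<noteq> {}}"
          using T norm_G by (auto simp: f_char)
      qed
      have op: "open (G -` T \<inter> {z. Re z < -1/2})"
        by (rule open_G[OF _ T(1)]) simp
      show ?thesis unfolding eq by (rule openin_open_Int[OF op])
    qed
  qed
  have card: "\<forall>x\<in>?S. example_f x \<noteq> {} \<and> finite (example_f x) \<and> card (example_f x) \<le> 3"
  proof
    fix x assume "x \<in> ?S"
    then have sub3: "example_f x \<subseteq> {1,-1,G x}" by (auto simp: f_char)
    have c3: "card {1,-1,G x} \<le> 3"
      by (simp add: card_insert_if)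
    have fin: "finite (example_f x)" using sub3 finite_subset by blast
    have "card (example_f x) \<le> 3" using card_mono[OF _ sub3] c3 by simp
    moreover have "1 \<in> example_f x" using \<open>x \<in> ?S\<close> by (simp add: f_char)
    ultimately show "example_f x \<noteq> {} \<and> finite (example_f x) \<and> card (example_f x) \<le> 3"
      using fin by auto
  qed
  show ?thesis
    unfolding at_most_n_valued_def lsc_map_def usc_map_def S1_def
    using sub usc lsc card by auto
qed

lemma frontier_ball_S1:
  "S1 frontier_of (sphere 0 1 \<inter> ball c r) \<subseteq> sphere c r"
proof -
  have op: "openin S1 (sphere 0 1 \<inter> ball c r)" unfolding S1_def by (rule openin_open_Int) simp
  have "S1 closure_of (sphere 0 1 \<inter> ball c r) \<subseteq> sphere 0 1 \<inter> cball c r"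
    unfolding S1_def by (rule closure_of_minimal) (auto intro: closedin_closed_Int)
  then show ?thesis unfolding frontier_of_def interior_of_openin[OF op]
    by (auto simp: dist_commute)
qed

lemma f_sub3: "z \<in> sphere 0 1 \<Longrightarrow> example_f z \<subseteq> {1,-1,G z}"
  by (auto simp: f_char)

lemma f_one: "z \<in> sphere 0 1 \<Longrightarrow> 1 \<in> example_f z"
  by (auto simp: f_char)

lemma sum_one:
  assumes "z \<in> sphere 0 1" "r > 0" "\<forall>y\<in>example_f z. y \<noteq> 1 \<longrightarrow> dist 1 y \<ge> r"
  shows "(\<Sum>y\<in>(sphere 0 1 \<inter> ball 1 r) \<inter> example_f z. w z y) = w z 1"
proof -
  have "(sphere 0 1 \<inter> ball 1 r) \<inter> example_f z = {1}"
    using assms f_one[OF assms(1)] by (auto simp: f_char)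
  then show ?thesis by simp
qed

lemma core:
  assumes W: "\<And>U x. openin S1 U \<Longrightarrow> x \<in> sphere 0 1 \<Longrightarrow> example_f x \<inter> (S1 frontier_of U) = {} \<Longrightarrow>
       \<exists>V. openin S1 V \<and> x \<in> V \<and> (\<forall>z\<in>V. (\<Sum>y\<in>U \<inter> example_f x. w x y) = (\<Sum>y\<in>U \<inter> example_f z. w z y))"
    and z: "z \<in> sphere 0 1" and r: "r > 0" and N: "open N" "z \<in> N"
    and hz: "\<forall>y\<in>example_f z. y \<noteq> 1 \<longrightarrow> dist 1 y > r"
    and hN: "\<forall>z'\<in>sphere 0 1 \<inter> N. \<forall>y\<in>example_f z'. y \<noteq> 1 \<longrightarrow> dist 1 y \<ge> r"
  shows "\<exists>V. open V \<and> z \<in> V \<and> (\<forall>z'\<in>sphere 0 1 \<inter> V. w z' 1 = w z 1)"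
proof -
  let ?U = "sphere 0 1 \<inter> ball (1::complex) r"
  have opU: "openin S1 ?U" unfolding S1_def by (rule openin_open_Int) simp
  have "example_f z \<inter> (S1 frontier_of ?U) = {}"
  proof -
    have "example_f z \<inter> sphere 1 r = {}" using hz r by (force simp: dist_commute)
    then show ?thesis using frontier_ball_S1[of 1 r] by blast
  qed
  then obtain V where V: "openin S1 V" "z \<in> V"
    "\<forall>z'\<in>V. (\<Sum>y\<in>?U \<inter> example_f z. w z y) = (\<Sum>y\<in>?U \<inter> example_f z'. w z' y)"
    using W[OF opU z] by blast
  obtain V' where V': "open V'" "V = sphere 0 1 \<inter> V'"
    using openin_open[THEN iffD1, OF V(1)[unfolded S1_def]] by blast
  have s0: "(\<Sum>y\<in>?U \<inter> example_f z. w z y) = w z 1"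
    by (rule sum_one[OF z r]) (use hz in force)
  show ?thesis
  proof (intro exI[of _ "V' \<inter> N"] conjI ballI)
    show "open (V' \<inter> N)" using V' N by auto
    show "z \<in> V' \<inter> N" using V V' N by auto
    fix z' assume z': "z' \<in> sphere 0 1 \<inter> (V' \<inter> N)"
    then have "(\<Sum>y\<in>?U \<inter> example_f z'. w z' y) = w z' 1"
      using hN r by (intro sum_one) auto
    then show "w z' 1 = w z 1" using V(3) V' z' s0 by auto
  qed
qed

lemma LOC:
  assumes W: "\<And>U x. openin S1 U \<Longrightarrow> x \<in> sphere 0 1 \<Longrightarrow> example_f x \<inter> (S1 frontier_of U) = {} \<Longrightarrow>
       \<exists>V. openin S1 V \<and> x \<in> V \<and> (\<forall>z\<in>V. (\<Sum>y\<in>U \<inter> example_f x. w x y) = (\<Sum>y\<in>U \<inter> example_f z. w z y))"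
    and z: "z \<in> sphere 0 1" and nz: "z \<noteq> circ (1/3)"
  shows "\<exists>V. open V \<and> z \<in> V \<and> (\<forall>z'\<in>sphere 0 1 \<inter> V. w z' 1 = w z 1)"
proof (cases "Re z \<le> -1/2")
  case False
  have d2: "dist (1::complex) (-1) = 2" by (simp add: dist_norm)
  show ?thesis
  proof (rule core[OF W z _ open_halfspace_Re_gt[of "-1/2"]])
    show "(1::real) > 0" by simp
    show "z \<in> {z. - 1 / 2 < Re z}" using False by simp
    show "\<forall>y\<in>example_f z. y \<noteq> 1 \<longrightarrow> 1 < dist 1 y" using False z d2 by (auto simp: f_char)
    show "\<forall>z'\<in>sphere 0 1 \<inter> {z. - 1 / 2 < Re z}. \<forall>y\<in>example_f z'. y \<noteq> 1 \<longrightarrow> 1 \<le> dist 1 y"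
      using d2 by (auto simp: f_char)
  qed
next
  case True
  have G1: "G z \<noteq> 1" using G_one[OF z True] nz by blast
  define d where "d = dist 1 (G z)"
  have dpos: "d > 0" using G1 by (simp add: d_def)
  have d2: "d \<le> 2" unfolding d_def
    using dist_triangle[of 1 "G z" 0] norm_G[of z] by (simp add: dist_norm norm_minus_commute)
  have dm1: "dist (1::complex) (-1) = 2" by (simp add: dist_norm)
  have "isCont G z" using G_cont True by simp
  then obtain \<delta> where \<delta>: "\<delta> > 0" "\<forall>z'. dist z' z < \<delta> \<longrightarrow> dist (G z') (G z) < d/3"
    using \<open>isCont G z\<close>[unfolded continuous_at_eps_delta, rule_format, of "d/3"] dpos by auto
  show ?thesis
  proof (rule core[OF W z _ open_ball[of z \<delta>]])
    show "d/3 > 0" using dpos by simp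
    show "z \<in> ball z \<delta>" using \<delta> by simp
    show "\<forall>y\<in>example_f z. y \<noteq> 1 \<longrightarrow> d/3 < dist 1 y"
    proof (intro ballI impI)
      fix y assume y: "y \<in> example_f z" "y \<noteq> 1"
      then have "y = -1 \<or> y = G z" using f_sub3[OF z] by blast
      then show "d/3 < dist 1 y"
      proof
        assume "y = -1" then show ?thesis using dm1 d2 dpos by simp
      qed (use d_def dpos in simp)
    qed
    show "\<forall>z'\<in>sphere 0 1 \<inter> ball z \<delta>. \<forall>y\<in>example_f z'. y \<noteq> 1 \<longrightarrow> d/3 \<le> dist 1 y"
    proof (intro ballI impI)
      fix z' y assume z': "z' \<in> sphere 0 1 \<inter> ball z \<delta>" and y: "y \<in> example_f z'" "y \<noteq> 1"
      have "dist z' z < \<delta>" using z' by (simp add: dist_commute)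
      then have "dist (G z') (G z) < d/3" using \<delta>(2) by blast
      then have hG: "dist 1 (G z') \<ge> d/3"
        using dist_triangle[of 1 "G z" "G z'"] d_def dist_commute[of "G z" "G z'"] dpos by linarith
      have "y = -1 \<or> y = G z'" using f_sub3[of z'] z' y by blast
      then show "d/3 \<le> dist 1 y"
      proof
        assume "y = -1" then show ?thesis using dm1 d2 by simp
      qed (use hG in simp)
    qed
  qed
qed

lemma circ_shift: "circ (x + 1) = circ x"
  by (simp add: circ_def distrib_left flip: cis_mult)

lemma part2: "\<not> (\<exists>w :: complex \<Rightarrow> complex \<Rightarrow> nat. N_weighted_map S1 S1 example_f w)"
proof
  assume "\<exists>w :: complex \<Rightarrow> complex \<Rightarrow> nat. N_weighted_map S1 S1 example_f w"
  then obtain w :: "complex \<Rightarrow> complex \<Rightarrow> nat" where NW: "N_weighted_map S1 S1 example_f w" by blast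
  have W: "\<And>U x. openin S1 U \<Longrightarrow> x \<in> sphere 0 1 \<Longrightarrow> example_f x \<inter> (S1 frontier_of U) = {} \<Longrightarrow>
       \<exists>V. openin S1 V \<and> x \<in> V \<and> (\<forall>z\<in>V. (\<Sum>y\<in>U \<inter> example_f x. w x y) = (\<Sum>y\<in>U \<inter> example_f z. w z y))"
    using NW unfolding N_weighted_map_def weighted_map_def S1_def by auto
  have P: "\<And>x y. x \<in> sphere 0 1 \<Longrightarrow> y \<in> example_f x \<Longrightarrow> w x y > 0"
    using NW unfolding N_weighted_map_def S1_def by auto
  define x0 where "x0 = circ (1/3)"
  have x0S: "x0 \<in> sphere 0 1" by (simp add: x0_def)
  have Rex0: "Re x0 = -1/2" unfolding x0_def Re_circ using cos_120 by simp
  have "G x0 = circ ((3*(1/3)-1)/2)" unfolding x0_def by (rule G_circ) simp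
  then have Gx0: "G x0 = 1" by simp
  have fx0: "example_f x0 = {1,-1}" using f_char[OF x0S] Rex0 Gx0 by simp
  have dm1: "dist (1::complex) (-1) = 2" by (simp add: dist_norm)
  let ?U = "sphere 0 1 \<inter> ball (1::complex) 1"
  have opU: "openin S1 ?U" unfolding S1_def by (rule openin_open_Int) simp
  have "example_f x0 \<inter> sphere 1 1 = {}" using fx0 dm1 by (auto simp: dist_commute)
  then have "example_f x0 \<inter> (S1 frontier_of ?U) = {}" using frontier_ball_S1[of 1 1] by blast
  then obtain V0 where V0: "openin S1 V0" "x0 \<in> V0"
    "\<forall>z\<in>V0. (\<Sum>y\<in>?U \<inter> example_f x0. w x0 y) = (\<Sum>y\<in>?U \<inter> example_f z. w z y)"
    using W[OF opU x0S] by blast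
  have "?U \<inter> example_f x0 = {1}" using fx0 dm1 by auto
  then have V0s: "\<forall>z\<in>V0. w x0 1 = (\<Sum>y\<in>?U \<inter> example_f z. w z y)" using V0(3) by simp
  obtain V0' where V0': "open V0'" "V0 = sphere 0 1 \<inter> V0'"
    using openin_open[THEN iffD1, OF V0(1)[unfolded S1_def]] by blast
  obtain \<delta> where \<delta>: "\<delta> > 0" "ball x0 \<delta> \<subseteq> V0'" using V0' V0(2) open_contains_ball by blast
  have "isCont circ (1/3)" unfolding circ_def cis_conv_exp by (intro continuous_intros)
  then obtain \<epsilon> where \<epsilon>: "\<epsilon> > 0" "\<forall>s. dist s (1/3) < \<epsilon> \<longrightarrow> dist (circ s) x0 < \<delta>"
    using \<open>isCont circ (1/3)\<close>[unfolded continuous_at_eps_delta, rule_format, of \<delta>] \<delta> x0_def by auto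
  define e where "e = min (\<epsilon>/2) (1/12)"
  have e: "e > 0" "e \<le> 1/12" "e < \<epsilon>" using \<epsilon> by (auto simp: e_def)
  have inV0: "circ s \<in> V0" if "\<bar>s - 1/3\<bar> \<le> e" for s
  proof -
    have "dist (circ s) x0 < \<delta>" using \<epsilon>(2) that e by (auto simp: dist_real_def)
    then show ?thesis using \<delta> V0' by (auto simp: dist_commute)
  qed
  define z1 where "z1 = circ (1/3 - e)"
  have z1S: "z1 \<in> sphere 0 1" by (simp add: z1_def)
  have "cos (2*pi/3) < cos (2*pi*(1/3 - e))"
    by (rule cos_monotone_0_pi) (use e in \<open>auto simp: field_simps\<close>)
  then have Rez1: "\<not> Re z1 \<le> -1/2" unfolding z1_def Re_circ using cos_120 by simp
  have "?U \<inter> example_f z1 = {1}" using f_char[OF z1S] Rez1 dm1 by auto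
  then have w1: "w x0 1 = w z1 1" using V0s inV0[of "1/3 - e"] e by (simp add: z1_def)
  define z2 where "z2 = circ (1/3 + e)"
  have z2S: "z2 \<in> sphere 0 1" by (simp add: z2_def)
  have t2: "1/3 + e \<in> {1/3..2/3}" using e by auto
  have Rez2: "Re z2 \<le> -1/2" unfolding z2_def Re_circ using cos_le_A[OF t2] .
  define q where "q = circ (3*e/2)"
  have "G z2 = circ ((3*(1/3+e)-1)/2)" unfolding z2_def by (rule G_circ[OF t2])
  also have "(3*(1/3+e)-1)/2 = 3*e/2" by (simp add: field_simps)
  finally have Gz2: "G z2 = q" by (simp add: q_def)
  have sinq: "sin (2*pi*(3*e/2)) > 0" by (rule sin_gt_zero) (use e in \<open>auto simp: field_simps\<close>)
  then have Imq: "Im q > 0" by (simp add: q_def Im_circ)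
  have "cos (pi/3) < cos (2*pi*(3*e/2))"
    by (rule cos_monotone_0_pi) (use e in \<open>auto simp: field_simps\<close>)
  then have cq: "Re q > 1/2" by (simp add: q_def Re_circ cos_60)
  have "(cmod (1 - q))\<^sup>2 = (1 - Re q)\<^sup>2 + (Im q)\<^sup>2" by (simp add: cmod_power2)
  also have "\<dots> = 2 - 2 * Re q"
    using cmod_power2[of q] norm_circ[of "3*e/2"] unfolding q_def[symmetric] by (simp add: power2_eq_square algebra_simps)
  finally have "(cmod (1 - q))\<^sup>2 < 1\<^sup>2" using cq by simp
  then have dq: "dist 1 q < 1" by (simp add: dist_norm power_less_imp_less_base)
  have q1: "q \<noteq> 1" "q \<noteq> -1" using Imq by auto
  have "?U \<inter> example_f z2 = {1, q}" using f_char[OF z2S] Rez2 Gz2 dm1 dq q1 by (auto simp: q_def)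
  then have "w x0 1 = w z2 1 + w z2 q" using V0s inV0[of "1/3 + e"] e q1 by (simp add: z2_def)
  moreover have "w z2 q > 0" using P[OF z2S] f_char[OF z2S] Rez2 Gz2 by simp
  ultimately have lt: "w z2 1 < w x0 1" by simp
  define C where "C = circ ` {1/3 + e .. 4/3 - e}"
  have contc: "continuous_on UNIV circ" unfolding circ_def cis_conv_exp by (intro continuous_intros)
  have conC: "connected C" unfolding C_def
    by (rule connected_continuous_image[OF continuous_on_subset[OF contc]]) auto
  have z2C: "z2 \<in> C" unfolding C_def z2_def using e by auto
  have "z1 = circ ((1/3 - e) + 1)" unfolding z1_def by (rule circ_shift[symmetric])
  also have "(1/3 - e) + 1 = 4/3 - e" by simp
  finally have "z1 = circ (4/3 - e)" .
  then have z1C: "z1 \<in> C" unfolding C_def using e by (auto intro!: image_eqI[of _ _ "4/3 - e"])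
  have CS: "C \<subseteq> sphere 0 1" unfolding C_def by auto
  have x0C: "x0 \<notin> C"
  proof
    assume "x0 \<in> C"
    then obtain s where s: "s \<in> {1/3 + e .. 4/3 - e}" "circ s = circ (1/3)" unfolding C_def x0_def by auto
    then obtain n::int where n: "s - 1/3 = n" using circ_eq by blast
    have "0 < real_of_int n" "real_of_int n < 1" using s n e by auto
    then have "0 < n" "n < 1" by simp_all
    then show False by linarith
  qed
  have "w z2 1 = w z1 1"
  proof (rule connected_equivalence_relation[OF conC z2C z1C, where R = "\<lambda>x y. w x 1 = w y 1"])
    fix a assume aC: "a \<in> C"
    then have aS: "a \<in> sphere 0 1" and ax: "a \<noteq> circ (1/3)" using CS x0C x0_def by auto
    obtain V where V: "open V" "a \<in> V" "\<forall>z'\<in>sphere 0 1 \<inter> V. w z' 1 = w a 1"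
      using LOC[OF W aS ax] by blast
    show "\<exists>T. openin (top_of_set C) T \<and> a \<in> T \<and> (\<forall>x\<in>T. w a 1 = w x 1)"
    proof (intro exI[of _ "C \<inter> V"] conjI ballI)
      show "openin (top_of_set C) (C \<inter> V)" by (rule openin_open_Int[OF V(1)])
      show "a \<in> C \<inter> V" using aC V(2) by blast
      fix x assume "x \<in> C \<inter> V"
      then have "x \<in> sphere 0 1 \<inter> V" using CS by blast
      then show "w a 1 = w x 1" using V(3) by metis
    qed
  qed simp_all
  then show False using w1 lt by simp
qed

theorem mainTheorem13:
  shows "at_most_n_valued S1 S1 3 example_f \<and>
         \<not> (\<exists>w :: complex \<Rightarrow> complex \<Rightarrow> nat. N_weighted_map S1 S1 example_f w)"
  using part1 part2 by blast

end
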